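(* Let $(Q,\cdot,e)$ be a double Ward quasigroup and define $x\diamond y=(e\cdot x)\cdot(e\cdot y)$ (so $(Q,\diamond)$ is a group with identity $e$). Then $(Q,\cdot,\diamond)$ is a lateral double magma, i.e. $(x\cdot y)\diamond(z\cdot w)=(y\diamond x)\cdot(w\diamond z)$ for all $x,y,z,w\in Q$. Moreover, if $(Q,\circ)$ is a group with identity $e$ such that $(x\cdot y)\circ(z\cdot w)=(y\circ x)\cdot(w\circ z)$ for all $x,y,z,w\in Q$, then $x\circ y=x\diamond y$ for all $x,y\in Q$.
   Context: A quasigroup is a magma in which $ax=b$ and $ya=b$ have unique solutions for all $a,b$. A double Ward quasigroup $(Q,\cdot,e)$ is a quasigroup with an element $e$ such that $(ee\cdot xz)(ey\cdot z)=xy$ for all $x,y,z$. *)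

theory Defs
  imports Main
begin

definition quasigroup :: "('a \<Rightarrow> 'a \<Rightarrow> 'a) \<Rightarrow> bool" where
  "quasigroup m \<longleftrightarrow> (\<forall>a b. (\<exists>!x. m a x = b) \<and> (\<exists>!y. m y a = b))"

definition double_ward_quasigroup :: "('a \<Rightarrow> 'a \<Rightarrow> 'a) \<Rightarrow> 'a \<Rightarrow> bool" where
  "double_ward_quasigroup m e \<longleftrightarrow> quasigroup m \<and>
     (\<forall>x y z. m (m (m e e) (m x z)) (m (m e y) z) = m x y)"

definition group_with_identity :: "('a \<Rightarrow> 'a \<Rightarrow> 'a) \<Rightarrow> 'a \<Rightarrow> bool" where
  "group_with_identity g e \<longleftrightarrow>
     (\<forall>x y z. g (g x y) z = g x (g y z)) \<and>
     (\<forall>x. g e x = x \<and> g x e = x) \<and>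
     (\<forall>x. \<exists>y. g x y = e \<and> g y x = e)"

definition diamond :: "('a \<Rightarrow> 'a \<Rightarrow> 'a) \<Rightarrow> 'a \<Rightarrow> 'a \<Rightarrow> 'a \<Rightarrow> 'a" where
  "diamond m e x y = m (m e x) (m e y)"

definition lateral_double_magma :: "('a \<Rightarrow> 'a \<Rightarrow> 'a) \<Rightarrow> ('a \<Rightarrow> 'a \<Rightarrow> 'a) \<Rightarrow> bool" where
  "lateral_double_magma m g \<longleftrightarrow>
     (\<forall>x y z w. g (m x y) (m z w) = m (g y x) (g w z))"

end

theory Submission
  imports Defs
begin

theorem theorem4p6:
  fixes m :: "'a \<Rightarrow> 'a \<Rightarrow> 'a" and e :: 'a
  assumes "double_ward_quasigroup m e"
  shows "lateral_double_magma m (diamond m e) \<and>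
         (\<forall>g. group_with_identity g e \<and> lateral_double_magma m g \<longrightarrow>
              (\<forall>x y. g x y = diamond m e x y))"
proof -
  have q: "quasigroup m" and A: "\<And>x y z. m (m (m e e) (m x z)) (m (m e y) z) = m x y"
    using assms unfolding double_ward_quasigroup_def by blast+
  have ex1: "\<And>a b. \<exists>!x. m a x = b" and ex2: "\<And>a b. \<exists>!y. m y a = b"
    using q unfolding quasigroup_def by blast+
  define ld where "ld a b = (THE x. m a x = b)" for a b
  define rd where "rd b a = (THE y. m y a = b)" for a b
  have l1: "\<And>a x. m a (ld a x) = x"
    unfolding ld_def by (rule theI'[OF ex1])
  have l2: "\<And>a x. ld a (m a x) = x"
    unfolding ld_def by (rule the1_equality[OF ex1]) (rule refl)
  have r1: "\<And>a x. m (rd x a) a = x"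
    unfolding rd_def by (rule theI'[OF ex2])
  have ee: "m e e = e" by (metis A r1)
  have inv: "\<And>x. m e (m e x) = x" by (metis A r1)
  have L2: "\<And>z w. m e (m (m e w) (m e z)) = m z w" by (metis A inv)
  have L2': "\<And>z w. m (m e w) (m e z) = m e (m z w)" by (metis L2 inv)
  have lat: "lateral_double_magma m (diamond m e)"
    unfolding lateral_double_magma_def diamond_def using L2' by simp
  moreover have "\<forall>g. group_with_identity g e \<and> lateral_double_magma m g \<longrightarrow>
              (\<forall>x y. g x y = diamond m e x y)"
  proof (intro allI impI)
    fix g x y
    assume h: "group_with_identity g e \<and> lateral_double_magma m g"
    then have gid: "\<And>x. g e x = x" "\<And>x. g x e = x"
      and lg: "\<And>x y z w. g (m x y) (m z w) = m (g y x) (g w z)"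
      unfolding group_with_identity_def lateral_double_magma_def by auto
    have "g (m e e) (m y x) = m (g e e) (g x y)" using lg by blast
    then have "m y x = m e (g x y)" using gid ee by simp
    moreover have "m e (diamond m e x y) = m y x" unfolding diamond_def using L2 by simp
    ultimately show "g x y = diamond m e x y" by (metis l2)
  qed
  ultimately show ?thesis by blast
qed

end
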